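(* Consider the continuous-time Markov process on $\mathbb N_0=\{0,1,2,\dots\}$ with rates $q(0,1)=1$, and for $x\ge1$: $q(x,x+1)=\frac{2x-1}{4x}$, $q(x,x-1)=1-\frac{2x-1}{4x}$, all other rates $0$ (so its jump chain has mean drift $-\frac{1}{2x}$ at $x\ge1$). Consider the $2$-leg spider walk with local configurations $L(x)=\{(x,x+1),(x,x+2)\}$, $x\in\mathbb N_0$, i.e. the process on $\{(x,x+1),(x,x+2):x\ge0\}$ in which a leg at $y$ jumps to $y\pm1$ at rate $q(y,y\pm1)$ provided the resulting configuration is again of this form. Then the Markov process is null recurrent whereas the spider walk is positive recurrent.
   Context: A continuous-time Markov process is called null/positive recurrent if its jump chain, with transition probabilities $p(x,y)=q(x,y)/\sum_{z\ne x}q(x,z)$ for $y\ne x$, is null/positive recurrent. *)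

theory Defs
  imports "HOL-Analysis.Analysis"
begin

text \<open>Discrete-time Markov chains given by a transition kernel P (P y z = probability
of jumping from y to z).  hit P x n y = probability that the chain started in y
first hits x at exactly time n.\<close>

fun hit :: "('a \<Rightarrow> 'a \<Rightarrow> real) \<Rightarrow> 'a \<Rightarrow> nat \<Rightarrow> 'a \<Rightarrow> real" where
  "hit P x 0 y = (if y = x then 1 else 0)"
| "hit P x (Suc n) y = (if y = x then 0 else infsum (\<lambda>z. P y z * hit P x n z) UNIV)"

text \<open>ret P x n = probability that the chain started in x first returns to x at time n+1.\<close>
definition ret :: "('a \<Rightarrow> 'a \<Rightarrow> real) \<Rightarrow> 'a \<Rightarrow> nat \<Rightarrow> real" where
  "ret P x n = infsum (\<lambda>z. P x z * hit P x n z) UNIV"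

definition recurrent_state :: "('a \<Rightarrow> 'a \<Rightarrow> real) \<Rightarrow> 'a \<Rightarrow> bool" where
  "recurrent_state P x \<longleftrightarrow> (\<lambda>n. ret P x n) sums 1"

definition positive_recurrent_state :: "('a \<Rightarrow> 'a \<Rightarrow> real) \<Rightarrow> 'a \<Rightarrow> bool" where
  "positive_recurrent_state P x \<longleftrightarrow>
     recurrent_state P x \<and> summable (\<lambda>n. real (Suc n) * ret P x n)"

definition null_recurrent_state :: "('a \<Rightarrow> 'a \<Rightarrow> real) \<Rightarrow> 'a \<Rightarrow> bool" where
  "null_recurrent_state P x \<longleftrightarrow>
     recurrent_state P x \<and> \<not> summable (\<lambda>n. real (Suc n) * ret P x n)"

definition jump_chain :: "('a \<Rightarrow> 'a \<Rightarrow> real) \<Rightarrow> 'a \<Rightarrow> 'a \<Rightarrow> real" where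
  "jump_chain q x y = (if y \<noteq> x then q x y / infsum (\<lambda>z. q x z) {z. z \<noteq> x} else 0)"

text \<open>A CTMC with rates q on state space S is null/positive recurrent iff its jump chain is
(every state of S being null/positive recurrent).\<close>
definition ctmc_null_recurrent :: "('a \<Rightarrow> 'a \<Rightarrow> real) \<Rightarrow> 'a set \<Rightarrow> bool" where
  "ctmc_null_recurrent q S \<longleftrightarrow> (\<forall>x\<in>S. null_recurrent_state (jump_chain q) x)"

definition ctmc_positive_recurrent :: "('a \<Rightarrow> 'a \<Rightarrow> real) \<Rightarrow> 'a set \<Rightarrow> bool" where
  "ctmc_positive_recurrent q S \<longleftrightarrow> (\<forall>x\<in>S. positive_recurrent_state (jump_chain q) x)"

definition qbd :: "nat \<Rightarrow> nat \<Rightarrow> real" where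
  "qbd x y =
     (if x = 0 then (if y = 1 then 1 else 0)
      else if y = x + 1 then (2 * real x - 1) / (4 * real x)
      else if y + 1 = x then 1 - (2 * real x - 1) / (4 * real x)
      else 0)"

text \<open>Spider configurations {a,b} with a<b are encoded as pairs (a,b).
Allowed configurations: L(x) = {(x,x+1),(x,x+2)}.\<close>
definition spider_states :: "(nat \<times> nat) set" where
  "spider_states = {(x, x + 1) | x. True} \<union> {(x, x + 2) | x. True}"

definition spider_rate :: "(nat \<Rightarrow> nat \<Rightarrow> real) \<Rightarrow> nat \<times> nat \<Rightarrow> nat \<times> nat \<Rightarrow> real" where
  "spider_rate q s t =
     (if s \<in> spider_states \<and> t \<in> spider_states then
        (if fst t = fst s \<and> snd t \<noteq> snd s then q (snd s) (snd t)
         else if snd t = snd s \<and> fst t \<noteq> fst s then q (fst s) (fst t)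
         else 0)
      else 0)"

end

theory Submission
  imports Defs
begin


definition bd :: "(nat \<Rightarrow> real) \<Rightarrow> nat \<Rightarrow> nat \<Rightarrow> real" where
  "bd a y z = (if z = Suc y then a y else if Suc z = y then 1 - a y else 0)"

locale bdc =
  fixes a :: "nat \<Rightarrow> real"
  assumes a0: "a 0 = 1"
    and apos: "\<And>y. y \<ge> 1 \<Longrightarrow> 0 < a y \<and> a y < 1"
begin

declare hit.simps(2)[simp del]

lemma a_gt0: "0 < a y"
  using a0 apos[of y] by (cases "y = 0") auto

lemma a_le1: "a y \<le> 1"
  using a0 apos[of y] by (cases "y = 0") auto

lemma bd_infsum: "infsum (\<lambda>z. bd a y z * g z) UNIV = a y * g (Suc y) + (1 - a y) * g (y - 1)"
proof -
  have "infsum (\<lambda>z. bd a y z * g z) UNIV = infsum (\<lambda>z. bd a y z * g z) {Suc y, y - 1}"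
    by (rule infsum_cong_neutral) (auto simp: bd_def)
  also have "\<dots> = bd a y (Suc y) * g (Suc y) + bd a y (y - 1) * g (y - 1)"
    by simp
  also have "\<dots> = a y * g (Suc y) + (1 - a y) * g (y - 1)"
    using a0 by (cases y) (auto simp: bd_def)
  finally show ?thesis .
qed

lemma hit_Suc: "hit (bd a) x (Suc n) y = (if y = x then 0 else a y * hit (bd a) x n (Suc y) + (1 - a y) * hit (bd a) x n (y - 1))"
  by (simp add: hit.simps(2) bd_infsum)

lemma ret_eq: "ret (bd a) x n = a x * hit (bd a) x n (Suc x) + (1 - a x) * hit (bd a) x n (x - 1)"
  by (simp add: ret_def bd_infsum)

lemma hit_nonneg: "0 \<le> hit (bd a) x n y"
proof (induction n arbitrary: y)
  case 0 then show ?case by simp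
next
  case (Suc n) then show ?case using a_gt0[of y] a_le1[of y]
    by (simp add: hit_Suc)
qed

lemma hit_x: "hit (bd a) x n x = (if n = 0 then 1 else 0)"
  by (cases n) (simp_all add: hit_Suc)

lemma hit_partial: "(\<Sum>k<n. hit (bd a) x k y) \<le> 1"
proof (induction n arbitrary: y)
  case 0 then show ?case by simp
next
  case (Suc n)
  show ?case
  proof (cases "y = x")
    case True
    then show ?thesis by (simp add: sum.lessThan_Suc_shift hit_x)
  next
    case False
    have "(\<Sum>k<Suc n. hit (bd a) x k y) = (\<Sum>k<n. hit (bd a) x (Suc k) y)"
      using False by (subst sum.lessThan_Suc_shift) simp
    also have "\<dots> = a y * (\<Sum>k<n. hit (bd a) x k (Suc y)) + (1 - a y) * (\<Sum>k<n. hit (bd a) x k (y - 1))"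
      using False by (simp add: hit_Suc sum.distrib sum_distrib_left)
    also have "\<dots> \<le> a y * 1 + (1 - a y) * 1"
      using Suc a_gt0[of y] a_le1[of y]
      by (intro add_mono mult_left_mono) auto
    finally show ?thesis by simp
  qed
qed

lemma hit_summable: "summable (\<lambda>k. hit (bd a) x k y)"
  by (rule summableI_nonneg_bounded[OF hit_nonneg hit_partial])

definition h :: "nat \<Rightarrow> nat \<Rightarrow> real" where "h x y = (\<Sum>k. hit (bd a) x k y)"

lemma h_le1: "h x y \<le> 1"
  unfolding h_def using hit_summable hit_partial hit_nonneg
  by (meson suminf_le_const)

lemma h_nonneg: "0 \<le> h x y"
  unfolding h_def using hit_summable hit_nonneg by (simp add: suminf_nonneg)

lemma h_x: "h x x = 1"
proof -
  have "(\<lambda>k. hit (bd a) x k x) sums 1"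
    using sums_single[of 0 "\<lambda>_. 1::real"] by (simp add: hit_x if_distrib)
  then show ?thesis unfolding h_def by (simp add: sums_iff)
qed

lemma h_eq: assumes "y \<noteq> x" shows "h x y = a y * h x (Suc y) + (1 - a y) * h x (y - 1)"
proof -
  have "h x y = hit (bd a) x 0 y + (\<Sum>k. hit (bd a) x (Suc k) y)"
    unfolding h_def using suminf_split_head[OF hit_summable] by simp
  also have "\<dots> = (\<Sum>k. a y * hit (bd a) x k (Suc y) + (1 - a y) * hit (bd a) x k (y - 1))"
    using assms by (simp add: hit_Suc)
  also have "\<dots> = a y * h x (Suc y) + (1 - a y) * h x (y - 1)"
    unfolding h_def
    by (subst suminf_add[symmetric]) (auto intro: summable_mult hit_summable simp: suminf_mult hit_summable)
  finally show ?thesis .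
qed

lemma h_below: assumes "y \<le> x" shows "h x y = 1"
proof -
  have step: "h x (Suc y) = h x y" if "y < x" for y
    using that
  proof (induction y)
    case 0
    have "0 \<noteq> x" using 0 by simp
    from h_eq[OF this] a0 show ?case by simp
  next
    case (Suc y)
    have IH: "h x (Suc y) = h x y" using Suc by simp
    have e: "h x (Suc y) = a (Suc y) * h x (Suc (Suc y)) + (1 - a (Suc y)) * h x y"
      using h_eq[of "Suc y" x] Suc.prems by simp
    have "a (Suc y) * (h x (Suc (Suc y)) - h x (Suc y)) = 0"
      using e IH by (auto simp: algebra_simps)
    then show ?case using a_gt0[of "Suc y"] IH by auto
  qed
  have "h x y = h x 0" if "y \<le> x" for y
    using that by (induction y) (auto simp: step)
  then show ?thesis using assms h_x[of x] by (metis order_refl)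
qed

end

locale bdr = bdc +
  assumes a_half: "\<And>y. y \<ge> 2 \<Longrightarrow> a y \<le> 1/2"
begin

lemma h_Suc_x: "h x (Suc x) = 1"
proof (rule ccontr)
  assume ne: "h x (Suc x) \<noteq> 1"
  define \<delta> where "\<delta> = 1 - h x (Suc x)"
  have dpos: "\<delta> > 0" using ne h_le1[of x "Suc x"] unfolding \<delta>_def by simp
  define r where "r y = (1 - a y) / a y" for y
  define d where "d y = h x y - h x (Suc y)" for y
  have rpos: "r y > 0" if "y \<ge> 1" for y using apos[OF that] unfolding r_def by simp
  have rge: "r y \<ge> 1" if "y \<ge> 2" for y
    using a_half[OF that] a_gt0[of y] unfolding r_def by (simp add: field_simps)
  have drec: "d y = r y * d (y - 1)" if "y > x" for y
  proof -
    have yx: "y \<noteq> x" using that by simp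
    have e: "h x y = a y * h x (Suc y) + (1 - a y) * h x (y - 1)" using h_eq[OF yx] .
    have y1: "Suc (y - 1) = y" using that by simp
    have "a y * d y = (1 - a y) * d (y - 1)"
      unfolding d_def y1 using e by (simp add: algebra_simps)
    then show ?thesis unfolding r_def using a_gt0[of y] by (simp add: field_simps)
  qed
  define c where "c = min 1 (r 1)"
  have cpos: "c > 0" using rpos[of 1] unfolding c_def by simp
  have dge: "d (x + m) \<ge> c * \<delta>" for m
  proof (induction m)
    case 0
    have "d x = \<delta>" unfolding d_def \<delta>_def using h_x by simp
    then show ?case using dpos unfolding c_def by simp
  next
    case (Suc m)
    have eq: "d (x + Suc m) = r (x + Suc m) * d (x + m)"
      using drec[of "x + Suc m"] by simp
    have nn: "0 \<le> c * \<delta>" using cpos dpos by simp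
    show ?case
    proof (cases "x + Suc m \<ge> 2")
      case True
      have "d (x + m) \<le> r (x + Suc m) * d (x + m)"
        using rge[OF True] Suc.IH nn mult_right_mono[of 1 "r (x + Suc m)" "d (x+m)"] by simp
      then show ?thesis using eq Suc.IH by simp
    next
      case False
      then have "x = 0" "m = 0" by auto
      then have "d (x + Suc m) = r 1 * \<delta>"
        using eq h_x unfolding d_def \<delta>_def by simp
      then show ?thesis unfolding c_def using dpos
        by (simp add: mult_right_mono)
    qed
  qed
  have hle: "h x (x + m) \<le> 1 - real m * (c * \<delta>)" for m
  proof (induction m)
    case 0 then show ?case using h_x by simp
  next
    case (Suc m)
    have "h x (x + Suc m) = h x (x + m) - d (x + m)" unfolding d_def by simp
    then show ?case using Suc dge[of m] by (simp add: algebra_simps)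
  qed
  obtain m where m: "real m > 1 / (c * \<delta>)" using reals_Archimedean2 by blast
  then have "real m * (c * \<delta>) > 1" using cpos dpos by (simp add: field_simps)
  then show False using hle[of m] h_nonneg[of x "x + m"] by simp
qed

lemma h_one: "h x y = 1"
proof -
  have "h x (x + m) = 1 \<and> h x (x + Suc m) = 1" for m
  proof (induction m)
    case 0 then show ?case using h_x h_Suc_x by simp
  next
    case (Suc m)
    have ne: "x + Suc m \<noteq> x" by simp
    have e: "h x (x + Suc m) = a (x + Suc m) * h x (Suc (x + Suc m)) + (1 - a (x + Suc m)) * h x (x + m)"
      using h_eq[OF ne] by simp
    have "a (x + Suc m) * (h x (Suc (x + Suc m)) - 1) = 0"
      using e Suc.IH by (simp add: algebra_simps)
    then show ?case using Suc.IH a_gt0[of "x + Suc m"] by simp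
  qed
  then show ?thesis using h_below
    by (metis le_add_diff_inverse nat_le_linear)
qed

lemma hit_sums: "(\<lambda>k. hit (bd a) x k y) sums 1"
  using hit_summable h_one unfolding h_def by (metis summable_sums)

lemma recurrent: "recurrent_state (bd a) x"
proof -
  have "(\<lambda>n. a x * hit (bd a) x n (Suc x) + (1 - a x) * hit (bd a) x n (x - 1)) sums (a x * 1 + (1 - a x) * 1)"
    by (intro sums_add sums_mult hit_sums)
  then show ?thesis unfolding recurrent_state_def ret_eq by simp
qed

lemma K_summable_ret:
  assumes "\<And>y. summable (\<lambda>k. real k * hit (bd a) x k y)"
  shows "summable (\<lambda>n. real (Suc n) * ret (bd a) x n)"
proof -
  have e: "real (Suc n) * ret (bd a) x n =
     a x * (real n * hit (bd a) x n (Suc x)) + a x * hit (bd a) x n (Suc x)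
     + ((1 - a x) * (real n * hit (bd a) x n (x - 1)) + (1 - a x) * hit (bd a) x n (x - 1))" for n
    unfolding ret_eq by (simp add: algebra_simps)
  show ?thesis unfolding e
    by (intro summable_add summable_mult assms hit_summable)
qed

lemma K_step:
  assumes "y \<noteq> x"
  shows "(\<Sum>k<Suc n. real k * hit (bd a) x k y) =
    a y * ((\<Sum>k<n. real k * hit (bd a) x k (Suc y)) + (\<Sum>k<n. hit (bd a) x k (Suc y)))
    + (1 - a y) * ((\<Sum>k<n. real k * hit (bd a) x k (y - 1)) + (\<Sum>k<n. hit (bd a) x k (y - 1)))"
proof -
  have "(\<Sum>k<Suc n. real k * hit (bd a) x k y) = (\<Sum>k<n. real (Suc k) * hit (bd a) x (Suc k) y)"
    by (subst sum.lessThan_Suc_shift) simp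
  also have "\<dots> = (\<Sum>k<n. a y * (real k * hit (bd a) x k (Suc y)) + a y * hit (bd a) x k (Suc y)
      + ((1 - a y) * (real k * hit (bd a) x k (y - 1)) + (1 - a y) * hit (bd a) x k (y - 1)))"
    using assms by (intro sum.cong refl) (simp add: hit_Suc algebra_simps)
  also have "\<dots> = a y * (\<Sum>k<n. real k * hit (bd a) x k (Suc y)) + a y * (\<Sum>k<n. hit (bd a) x k (Suc y))
      + ((1 - a y) * (\<Sum>k<n. real k * hit (bd a) x k (y - 1)) + (1 - a y) * (\<Sum>k<n. hit (bd a) x k (y - 1)))"
    by (simp add: sum.distrib sum_distrib_left)
  also have "\<dots> = a y * ((\<Sum>k<n. real k * hit (bd a) x k (Suc y)) + (\<Sum>k<n. hit (bd a) x k (Suc y)))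
    + (1 - a y) * ((\<Sum>k<n. real k * hit (bd a) x k (y - 1)) + (\<Sum>k<n. hit (bd a) x k (y - 1)))"
    by (simp add: algebra_simps)
  finally show ?thesis .
qed

lemma positive:
  fixes \<pi> :: "nat \<Rightarrow> real"
  assumes pi_pos: "\<And>y. \<pi> y > 0"
    and rev: "\<And>y. \<pi> y * a y = \<pi> (Suc y) * (1 - a (Suc y))"
    and pi_sum: "summable \<pi>"
  shows "positive_recurrent_state (bd a) x"
proof -
  define T where "T k = (\<Sum>j. \<pi> (k + j))" for k
  define C where "C k = (\<Sum>j\<le>k. \<pi> j)" for k
  define e where "e k = T k / ((1 - a k) * \<pi> k)" for k
  define f where "f k = C k / (a k * \<pi> k)" for k
  define V where "V y = (if x \<le> y then (\<Sum>k\<in>{Suc x..y}. e k) else (\<Sum>k\<in>{y..<x}. f k))" for y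
  have T_split: "T k = \<pi> k + T (Suc k)" for k
  proof -
    have s: "summable (\<lambda>j. \<pi> (k + j))"
      using pi_sum summable_ignore_initial_segment[of \<pi> k] by (simp add: add.commute)
    show ?thesis unfolding T_def using suminf_split_head[OF s] by simp
  qed
  have T_nn: "T k \<ge> 0" for k
  proof -
    have s: "summable (\<lambda>j. \<pi> (k + j))"
      using pi_sum summable_ignore_initial_segment[of \<pi> k] by (simp add: add.commute)
    show ?thesis unfolding T_def using s pi_pos by (simp add: suminf_nonneg less_imp_le)
  qed
  have C_nn: "C k \<ge> 0" for k unfolding C_def using pi_pos by (simp add: sum_nonneg less_imp_le)
  have e_nn: "e k \<ge> 0" if "k \<ge> 1" for k
    unfolding e_def using T_nn apos[OF that] pi_pos[of k] by simp
  have f_nn: "f k \<ge> 0" for k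
    unfolding f_def using C_nn a_gt0[of k] pi_pos[of k] by simp
  have V_nn: "V y \<ge> 0" for y
    unfolding V_def using e_nn f_nn by (auto intro: sum_nonneg)
  have V_x: "V x = 0" unfolding V_def by simp
  have V_le: "V y = (\<Sum>k\<in>{y..<x}. f k)" if "y \<le> x" for y
    using that unfolding V_def by auto
  have V_above: "V (Suc y) = V y + e (Suc y)" if "x \<le> y" for y
    using that unfolding V_def by simp
  have V_below: "V y = f y + V (Suc y)" if "y < x" for y
    using that V_le[of y] V_le[of "Suc y"] by (simp add: sum.atLeast_Suc_lessThan)
  have key: "1 + a y * V (Suc y) + (1 - a y) * V (y - 1) \<le> V y" if "y \<noteq> x" for y
  proof (cases "x < y")
    case True
    then obtain z where z: "y = Suc z" "x \<le> z" by (cases y) auto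
    have i1: "a (Suc z) * e (Suc (Suc z)) = T (Suc (Suc z)) / \<pi> (Suc z)"
    proof -
      have d: "(1 - a (Suc (Suc z))) * \<pi> (Suc (Suc z)) = \<pi> (Suc z) * a (Suc z)"
        using rev[of "Suc z"] by (simp add: mult.commute)
      show ?thesis unfolding e_def d using a_gt0[of "Suc z"] pi_pos[of "Suc z"]
        by (simp add: field_simps)
    qed
    have i2: "(1 - a (Suc z)) * e (Suc z) = T (Suc z) / \<pi> (Suc z)"
      unfolding e_def using apos[of "Suc z"] pi_pos[of "Suc z"] by (simp add: field_simps)
    have i3: "T (Suc z) / \<pi> (Suc z) = 1 + T (Suc (Suc z)) / \<pi> (Suc z)"
      using T_split[of "Suc z"] pi_pos[of "Suc z"] by (simp add: field_simps)
    have v1: "V (Suc (Suc z)) = V (Suc z) + e (Suc (Suc z))" using V_above z by simp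
    have v0: "V z = V (Suc z) - e (Suc z)" using V_above[of z] z by simp
    have "1 + a y * V (Suc y) + (1 - a y) * V (y - 1)
      = 1 + a (Suc z) * (V (Suc z) + e (Suc (Suc z))) + (1 - a (Suc z)) * (V (Suc z) - e (Suc z))"
      using z v1 v0 by simp
    also have "\<dots> = 1 + V (Suc z) + a (Suc z) * e (Suc (Suc z)) - (1 - a (Suc z)) * e (Suc z)"
      by (simp add: algebra_simps)
    also have "\<dots> = V y" unfolding i1 i2 i3 z by simp
    finally show ?thesis by simp
  next
    case False
    then have yx: "y < x" using that by simp
    show ?thesis
    proof (cases y)
      case 0
      have "f 0 = 1" unfolding f_def C_def using a0 pi_pos[of 0] by simp
      then show ?thesis using V_below[OF yx] a0 0 by simp
    next
      case (Suc w)
      have wx: "w < x" using yx Suc by simp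
      have i1: "a (Suc w) * f (Suc w) = C (Suc w) / \<pi> (Suc w)"
        unfolding f_def using a_gt0[of "Suc w"] pi_pos[of "Suc w"] by (simp add: field_simps)
      have i2: "(1 - a (Suc w)) * f w = C w / \<pi> (Suc w)"
      proof -
        have d: "a w * \<pi> w = (1 - a (Suc w)) * \<pi> (Suc w)"
          using rev[of w] by (simp add: mult.commute)
        show ?thesis unfolding f_def d using pi_pos[of "Suc w"] apos[of "Suc w"]
          by (simp add: field_simps)
      qed
      have i3: "C (Suc w) / \<pi> (Suc w) = 1 + C w / \<pi> (Suc w)"
        unfolding C_def using pi_pos[of "Suc w"] by (simp add: field_simps)
      have v1: "V (Suc w) = f (Suc w) + V (Suc (Suc w))" using V_below yx Suc by simp
      have v0: "V w = f w + V (Suc w)" using V_below wx by simp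
      have "1 + a y * V (Suc y) + (1 - a y) * V (y - 1)
        = 1 + V (Suc w) - a (Suc w) * f (Suc w) + (1 - a (Suc w)) * f w"
        unfolding Suc using v0 v1 by (simp add: algebra_simps)
      also have "\<dots> = V y" unfolding i1 i2 i3 Suc by simp
      finally show ?thesis by simp
    qed
  qed
  have Kb: "(\<Sum>k<n. real k * hit (bd a) x k y) \<le> V y" for n y
  proof (induction n arbitrary: y)
    case 0 then show ?case using V_nn by simp
  next
    case (Suc n)
    show ?case
    proof (cases "y = x")
      case True
      have "(\<Sum>k<Suc n. real k * hit (bd a) x k x) = 0"
        by (rule sum.neutral) (simp add: hit_x)
      then show ?thesis using V_x True by simp
    next
      case False
      have "(\<Sum>k<Suc n. real k * hit (bd a) x k y) \<le>
         a y * (V (Suc y) + 1) + (1 - a y) * (V (y - 1) + 1)"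
        unfolding K_step[OF False]
        using Suc.IH hit_partial a_gt0[of y] a_le1[of y]
        by (intro add_mono mult_left_mono) auto
      then show ?thesis using key[OF False] by (simp add: algebra_simps)
    qed
  qed
  have "summable (\<lambda>k. real k * hit (bd a) x k y)" for y
    by (rule summableI_nonneg_bounded[OF _ Kb]) (simp add: hit_nonneg)
  then show ?thesis
    unfolding positive_recurrent_state_def using recurrent K_summable_ret by blast
qed

lemma null:
  fixes \<pi> :: "nat \<Rightarrow> real"
  assumes pi_pos: "\<And>y. \<pi> y > 0"
    and rev: "\<And>y. \<pi> y * a y = \<pi> (Suc y) * (1 - a (Suc y))"
    and pi_nsum: "\<not> summable \<pi>"
    and pi_bd: "\<And>y. \<pi> y \<le> B"
  shows "null_recurrent_state (bd a) x"
proof -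
  have Bpos: "B > 0" using pi_pos[of 0] pi_bd[of 0] by simp
  have "\<not> summable (\<lambda>n. real (Suc n) * ret (bd a) x n)"
  proof
    assume S: "summable (\<lambda>n. real (Suc n) * ret (bd a) x n)"
    have S1: "summable (\<lambda>k. real k * hit (bd a) x k (Suc x))"
    proof (rule summable_comparison_test'[where N=0, OF summable_divide[OF S, of "a x"]])
      fix n :: nat
      have "a x * hit (bd a) x n (Suc x) \<le> ret (bd a) x n"
        unfolding ret_eq using hit_nonneg[of x n "x - 1"] a_le1[of x] by simp
      then have "real n * (a x * hit (bd a) x n (Suc x)) \<le> real (Suc n) * ret (bd a) x n"
        using hit_nonneg[of x n "Suc x"] a_gt0[of x]
        by (intro mult_mono) auto
      then show "norm (real n * hit (bd a) x n (Suc x)) \<le> real (Suc n) * ret (bd a) x n / a x"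
        using hit_nonneg[of x n "Suc x"] a_gt0[of x] by (simp add: field_simps)
    qed
    have Sm: "summable (\<lambda>k. real k * hit (bd a) x k (x + Suc m))" for m
    proof (induction m)
      case 0 then show ?case using S1 by simp
    next
      case (Suc m)
      define y where "y = x + Suc m"
      have yx: "y \<noteq> x" unfolding y_def by simp
      have g: "summable (\<lambda>k. real (Suc k) * hit (bd a) x (Suc k) y / a y)"
        using Suc.IH summable_Suc_iff[of "\<lambda>k. real k * hit (bd a) x k y"] unfolding y_def
        by (intro summable_divide) simp
      have "summable (\<lambda>k. real k * hit (bd a) x k (Suc y))"
      proof (rule summable_comparison_test'[where N=0, OF g])
        fix n :: nat
        have "a y * hit (bd a) x n (Suc y) \<le> hit (bd a) x (Suc n) y"
          unfolding hit_Suc using yx hit_nonneg[of x n "y - 1"] a_le1[of y] by simp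
        then have "real n * (a y * hit (bd a) x n (Suc y)) \<le> real (Suc n) * hit (bd a) x (Suc n) y"
          using hit_nonneg[of x n "Suc y"] a_gt0[of y]
          by (intro mult_mono) auto
        then show "norm (real n * hit (bd a) x n (Suc y)) \<le> real (Suc n) * hit (bd a) x (Suc n) y / a y"
          using hit_nonneg[of x n "Suc y"] a_gt0[of y] by (simp add: field_simps)
      qed
      then show ?case unfolding y_def by simp
    qed
    have Sx: "summable (\<lambda>k. real k * hit (bd a) x k x)"
    proof -
      have "(\<lambda>k. real k * hit (bd a) x k x) = (\<lambda>k. 0)" by (auto simp: hit_x)
      then show ?thesis by simp
    qed
    have Sy: "summable (\<lambda>k. real k * hit (bd a) x k y)" if "x \<le> y" for y
    proof (cases "y = x")
      case True then show ?thesis using Sx by simp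
    next
      case False
      then have "y = x + Suc (y - x - 1)" using that by simp
      then show ?thesis using Sm[of "y - x - 1"] by simp
    qed
    define K where "K y = (\<Sum>k. real k * hit (bd a) x k y)" for y
    have K_nn: "K y \<ge> 0" if "x \<le> y" for y
      unfolding K_def using Sy[OF that] hit_nonneg by (simp add: suminf_nonneg)
    have Keq: "K y = a y * (K (Suc y) + 1) + (1 - a y) * (K (y - 1) + 1)" if "x < y" for y
    proof -
      have yx: "y \<noteq> x" using that by simp
      have s1: "summable (\<lambda>k. real k * hit (bd a) x k (Suc y))" using Sy that by simp
      have s2: "summable (\<lambda>k. real k * hit (bd a) x k (y - 1))" using Sy that by simp
      have "K y = (\<Sum>k. real (Suc k) * hit (bd a) x (Suc k) y)"
        unfolding K_def using suminf_split_head[OF Sy[of y]] that by simp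
      also have "\<dots> = (\<Sum>k. a y * (real k * hit (bd a) x k (Suc y)) + a y * hit (bd a) x k (Suc y)
          + ((1 - a y) * (real k * hit (bd a) x k (y - 1)) + (1 - a y) * hit (bd a) x k (y - 1)))"
        using yx by (intro suminf_cong) (simp add: hit_Suc algebra_simps)
      also have "\<dots> = a y * K (Suc y) + a y * 1 + ((1 - a y) * K (y - 1) + (1 - a y) * 1)"
      proof (rule sums_unique[symmetric])
        show "(\<lambda>k. a y * (real k * hit (bd a) x k (Suc y)) + a y * hit (bd a) x k (Suc y)
          + ((1 - a y) * (real k * hit (bd a) x k (y - 1)) + (1 - a y) * hit (bd a) x k (y - 1))) sums
          (a y * K (Suc y) + a y * 1 + ((1 - a y) * K (y - 1) + (1 - a y) * 1))"
          unfolding K_def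
          by (intro sums_add sums_mult hit_sums summable_sums s1 s2)
      qed
      finally show ?thesis by (simp add: algebra_simps)
    qed
    define D where "D y = K (Suc y) - K y" for y
    define E where "E y = \<pi> y * a y * D y" for y
    have Erec: "E y = E (y - 1) - \<pi> y" if "x < y" for y
    proof -
      have y1: "Suc (y - 1) = y" using that by simp
      have "a y * D y = (1 - a y) * D (y - 1) - 1"
        unfolding D_def y1 using Keq[OF that] by (simp add: algebra_simps)
      then have "\<pi> y * (a y * D y) = \<pi> y * ((1 - a y) * D (y - 1) - 1)"
        by simp
      then have "\<pi> y * a y * D y = \<pi> y * (1 - a y) * D (y - 1) - \<pi> y"
        by (simp add: algebra_simps)
      also have "\<pi> y * (1 - a y) = \<pi> (y - 1) * a (y - 1)"
        using rev[of "y - 1"] y1 by simp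
      finally show ?thesis unfolding E_def by simp
    qed
    define P0 where "P0 = (\<Sum>k<Suc x. \<pi> k)"
    have Eform: "E (x + m) = E x + P0 - (\<Sum>k<Suc (x + m). \<pi> k)" for m
    proof (induction m)
      case 0 then show ?case unfolding P0_def by simp
    next
      case (Suc m)
      have "E (x + Suc m) = E (x + m) - \<pi> (Suc (x + m))"
        using Erec[of "x + Suc m"] by simp
      then show ?case using Suc.IH by simp
    qed
    obtain n where n: "(\<Sum>k<n. \<pi> k) > E x + P0 + 1"
    proof (rule ccontr)
      assume "\<not> thesis"
      then have "\<forall>n. (\<Sum>k<n. \<pi> k) \<le> E x + P0 + 1" using that by (meson not_less)
      then have "summable \<pi>"
        using pi_pos by (intro summableI_nonneg_bounded[of \<pi> "E x + P0 + 1"]) (auto intro: less_imp_le)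
      then show False using pi_nsum by simp
    qed
    have Ele: "E (x + m) \<le> -1" if "m \<ge> n" for m
    proof -
      have "(\<Sum>k<n. \<pi> k) \<le> (\<Sum>k<Suc (x + m). \<pi> k)"
        using that pi_pos by (intro sum_mono2) (auto intro: less_imp_le)
      then show ?thesis using Eform[of m] n by simp
    qed
    have Dle: "D (x + m) \<le> - 1 / B" if "m \<ge> n" for m
    proof -
      have p: "0 < \<pi> (x + m) * a (x + m)" using pi_pos a_gt0 by simp
      have pb: "\<pi> (x + m) * a (x + m) \<le> B"
      proof -
        have "\<pi> (x+m) * a (x+m) \<le> \<pi> (x+m) * 1"
          using a_le1[of "x+m"] pi_pos[of "x+m"] by (intro mult_left_mono) auto
        then show ?thesis using pi_bd[of "x + m"] by simp
      qed
      have "\<pi> (x + m) * a (x + m) * D (x + m) \<le> -1" using Ele[OF that] unfolding E_def .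
      then have "D (x + m) \<le> -1 / (\<pi> (x + m) * a (x + m))"
        using p by (simp add: field_simps)
      also have "\<dots> \<le> -1 / B"
        using p pb by (simp add: frac_le)
      finally show ?thesis .
    qed
    have Kle: "K (x + n + j) \<le> K (x + n) - real j / B" for j
    proof (induction j)
      case 0 then show ?case by simp
    next
      case (Suc j)
      have "K (x + n + Suc j) = K (x + n + j) + D (x + (n + j))" unfolding D_def by (simp add: add.assoc)
      moreover have "real (Suc j) / B = real j / B + 1 / B" by (simp add: add_divide_distrib)
      ultimately show ?case using Suc.IH Dle[of "n + j"] by (simp add: add.assoc)
    qed
    obtain j where j: "real j > K (x + n) * B" using reals_Archimedean2 by blast
    then have "real j / B > K (x + n)" using Bpos by (simp add: field_simps)
    then show False using Kle[of j] K_nn[of "x + n + j"] by simp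
  qed
  then show ?thesis unfolding null_recurrent_state_def using recurrent by blast
qed

end


definition qu :: "nat \<Rightarrow> real" where "qu y = (if y = 0 then 1 else (2 * real y - 1) / (4 * real y))"
definition qd :: "nat \<Rightarrow> real" where "qd y = (if y = 0 then 0 else (2 * real y + 1) / (4 * real y))"
definition mu :: "nat \<Rightarrow> real" where "mu y = (if y = 0 then 1/4 else real y / (4 * real y ^ 2 - 1))"

lemma qbd_alt: "qbd x y = (if y = Suc x then qu x else if Suc y = x then qd x else 0)"
  unfolding qbd_def qu_def qd_def by (auto simp: field_simps)

lemma qu_pos: "qu y > 0" unfolding qu_def by auto
lemma qu_le1: "qu y \<le> 1" unfolding qu_def by auto
lemma qu_half: "y \<ge> 1 \<Longrightarrow> qu y \<le> 1/2" unfolding qu_def by auto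
lemma qd_pos: "y \<ge> 1 \<Longrightarrow> qd y > 0" unfolding qd_def by auto
lemma qd_half: "y \<ge> 1 \<Longrightarrow> qd y \<ge> 1/2" unfolding qd_def by (auto simp: field_simps)
lemma qd_le1: "qd y \<le> 1" unfolding qd_def by (auto simp: field_simps)
lemma qd0: "qd 0 = 0" unfolding qd_def by simp
lemma qu_qd: "y \<ge> 1 \<Longrightarrow> 1 - qu y = qd y" unfolding qu_def qd_def by (auto simp: field_simps)
lemma qu_lt1: "y \<ge> 1 \<Longrightarrow> qu y < 1" unfolding qu_def by (auto simp: field_simps)

lemma d_pos: "y \<noteq> 0 \<Longrightarrow> 4 * real y ^ 2 - 1 > 0"
proof -
  assume "y \<noteq> 0"
  then have "real y \<ge> 1" by simp
  then have "real y ^ 2 \<ge> 1" using one_le_power by blast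
  then show ?thesis by simp
qed

lemma mu_pos: "mu y > 0"
  unfolding mu_def using d_pos[of y] by auto

lemma mu_le: "mu y \<le> 1 / (real y + 1)"
proof (cases "y = 0")
  case False
  then have y1: "real y \<ge> 1" by simp
  have d: "4 * real y ^ 2 - 1 > 0" using d_pos[of y] False by simp
  have "real y * (real y + 1) \<le> 4 * real y ^ 2 - 1"
  proof -
    have "real y \<le> real y * real y" using mult_right_mono[of 1 "real y" "real y"] y1 by simp
    moreover have e: "real y * (real y + 1) = real y * real y + real y" by (simp add: distrib_left)
    ultimately have h: "real y * (real y + 1) \<le> 4 * (real y * real y) - 1" using y1 by linarith
    show ?thesis using h by (simp add: power2_eq_square)
  qed
  then show ?thesis unfolding mu_def using False d by (simp add: field_simps)
qed (simp add: mu_def)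

lemma mu_ge: "mu y \<ge> inverse (real y) / 4"
proof (cases "y = 0")
  case False
  have d: "4 * real y ^ 2 - 1 > 0" using d_pos[of y] False by simp
  then show ?thesis unfolding mu_def using False by (simp add: field_simps power2_eq_square)
qed (simp add: mu_def)

lemma mu_rev: "mu y * qu y = mu (Suc y) * qd (Suc y)"
proof (cases "y = 0")
  case True then show ?thesis by (simp add: mu_def qu_def qd_def)
next
  case False
  define t where "t = real y"
  have t1: "t \<ge> 1" using False unfolding t_def by simp
  have tt: "t * t \<ge> 1" using mult_mono[of 1 t 1 t] t1 by simp
  have ne: "t * (t * 4) \<noteq> 1"
  proof -
    have "t * (t * 4) = 4 * (t * t)" by (simp add: mult_ac)
    then show ?thesis using tt by linarith
  qed
  have L: "mu y * qu y = 1 / (4 * (2 * t + 1))"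
  proof -
    have "mu y * qu y = t / ((2 * t - 1) * (2 * t + 1)) * ((2 * t - 1) / (4 * t))"
      using ne unfolding mu_def qu_def t_def using False by (simp add: algebra_simps power2_eq_square)
    also have "\<dots> = 1 / (4 * (2 * t + 1))" using t1 ne by (simp add: field_simps)
    finally show ?thesis .
  qed
  have R: "mu (Suc y) * qd (Suc y) = 1 / (4 * (2 * t + 1))"
  proof -
    have "mu (Suc y) * qd (Suc y) = (t + 1) / ((2 * t + 1) * (2 * t + 3)) * ((2 * t + 3) / (4 * (t + 1)))"
      unfolding mu_def qd_def t_def by (simp add: algebra_simps power2_eq_square)
    also have "\<dots> = 1 / (4 * (2 * t + 1))"
    proof -
      have p: "2 * t + 1 \<noteq> 0" "2 * t + 3 \<noteq> 0" "t + 1 \<noteq> 0" using t1 by auto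
      show ?thesis using p by (simp add: divide_simps) (simp add: algebra_simps)
    qed
    finally show ?thesis .
  qed
  show ?thesis using L R by simp
qed

lemma jump_qbd: "jump_chain qbd = bd qu"
proof (intro ext)
  fix x y :: nat
  have tot: "infsum (qbd x) {z. z \<noteq> x} = 1"
  proof -
    have "infsum (qbd x) {z. z \<noteq> x} = infsum (qbd x) {Suc x, x - 1}"
      by (rule infsum_cong_neutral) (auto simp: qbd_alt)
    also have "\<dots> = 1"
      using qu_qd[of x] by (cases x) (auto simp: qbd_alt qu_def)
    finally show ?thesis .
  qed
  show "jump_chain qbd x y = bd qu x y"
    unfolding jump_chain_def tot bd_def qbd_alt using qu_qd[of x] by auto
qed

interpretation Q: bdr qu
  by unfold_locales (auto simp: qu_def intro: qu_lt1 qu_half)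

lemma part1: "ctmc_null_recurrent qbd UNIV"
  unfolding ctmc_null_recurrent_def jump_qbd
proof
  fix x :: nat
  show "null_recurrent_state (bd qu) x"
  proof (rule Q.null[where \<pi>=mu and B=1])
    show "mu y > 0" for y by (rule mu_pos)
    show "mu y * qu y = mu (Suc y) * (1 - qu (Suc y))" for y
      using mu_rev[of y] qu_qd[of "Suc y"] by simp
    show "mu y \<le> 1" for y using mu_le[of y]
      by (smt (verit) divide_le_eq_1 of_nat_0_le_iff)
    show "\<not> summable mu"
    proof
      assume "summable mu"
      then have "summable (\<lambda>y. inverse (real y) / 4)"
      proof (rule summable_comparison_test'[where N=0])
        fix n :: nat
        show "norm (inverse (real n) / 4) \<le> mu n" using mu_ge[of n] by simp
      qed
      then have "summable (\<lambda>y. 4 * (inverse (real y) / 4))" by (rule summable_mult)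
      then show False using not_summable_harmonic[where 'a=real] by simp
    qed
  qed
qed



lemma infsum_transfer:
  fixes P :: "'a \<Rightarrow> 'a \<Rightarrow> real" and Q :: "nat \<Rightarrow> nat \<Rightarrow> real" and f :: "nat \<Rightarrow> 'a"
  assumes inj: "inj f" and out: "\<And>m z. z \<notin> range f \<Longrightarrow> P (f m) z = 0"
    and eq: "\<And>m k. P (f m) (f k) = Q m k"
  shows "infsum (\<lambda>z. P (f y) z * g z) UNIV = infsum (\<lambda>k. Q y k * g (f k)) UNIV"
proof -
  have "infsum (\<lambda>z. P (f y) z * g z) UNIV = infsum (\<lambda>z. P (f y) z * g z) (range f)"
    by (rule infsum_cong_neutral) (auto simp: out)
  also have "\<dots> = infsum ((\<lambda>z. P (f y) z * g z) \<circ> f) UNIV"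
    by (rule infsum_reindex) (use inj in simp)
  also have "\<dots> = infsum (\<lambda>k. Q y k * g (f k)) UNIV"
    by (simp add: o_def eq)
  finally show ?thesis .
qed

lemma hit_transfer:
  fixes P :: "'a \<Rightarrow> 'a \<Rightarrow> real" and Q :: "nat \<Rightarrow> nat \<Rightarrow> real" and f :: "nat \<Rightarrow> 'a"
  assumes inj: "inj f" and out: "\<And>m z. z \<notin> range f \<Longrightarrow> P (f m) z = 0"
    and eq: "\<And>m k. P (f m) (f k) = Q m k"
  shows "hit P (f x) n (f y) = hit Q x n y"
proof (induction n arbitrary: y)
  case 0 then show ?case using inj by (simp add: inj_eq)
next
  case (Suc n)
  have "infsum (\<lambda>z. P (f y) z * hit P (f x) n z) UNIV = infsum (\<lambda>k. Q y k * hit P (f x) n (f k)) UNIV"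
    by (rule infsum_transfer[where P=P and Q=Q and f=f, OF inj out eq])
  also have "\<dots> = infsum (\<lambda>k. Q y k * hit Q x n k) UNIV" by (simp add: Suc.IH)
  finally show ?case using inj by (simp add: inj_eq hit.simps(2))
qed

lemma pos_transfer:
  fixes P :: "'a \<Rightarrow> 'a \<Rightarrow> real" and Q :: "nat \<Rightarrow> nat \<Rightarrow> real" and f :: "nat \<Rightarrow> 'a"
  assumes inj: "inj f" and out: "\<And>m z. z \<notin> range f \<Longrightarrow> P (f m) z = 0"
    and eq: "\<And>m k. P (f m) (f k) = Q m k"
    and pos: "positive_recurrent_state Q x"
  shows "positive_recurrent_state P (f x)"
proof -
  have "ret P (f x) n = ret Q x n" for n
  proof -
    have h: "hit P (f x) n (f k) = hit Q x n k" for k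
      by (rule hit_transfer[where P=P and Q=Q and f=f, OF inj out eq])
    have "ret P (f x) n = infsum (\<lambda>k. Q x k * hit P (f x) n (f k)) UNIV"
      unfolding ret_def by (rule infsum_transfer[where P=P and Q=Q and f=f, OF inj out eq])
    also have "\<dots> = ret Q x n" unfolding ret_def h ..
    finally show ?thesis .
  qed
  then have "ret P (f x) = ret Q x" by auto
  then show ?thesis using pos unfolding positive_recurrent_state_def recurrent_state_def by simp
qed

definition enc :: "nat \<Rightarrow> nat \<times> nat" where "enc n = (n div 2, n div 2 + 1 + n mod 2)"

lemma enc_inj: "inj enc"
proof (rule injI)
  fix m n assume "enc m = enc n"
  then have "m div 2 = n div 2" "m mod 2 = n mod 2" unfolding enc_def by auto
  moreover have "m = 2 * (m div 2) + m mod 2" "n = 2 * (n div 2) + n mod 2" by simp_all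
  ultimately show "m = n" by simp
qed

lemma enc_even: "enc (2 * x) = (x, Suc x)" unfolding enc_def by simp
lemma enc_odd: "enc (Suc (2 * x)) = (x, Suc (Suc x))" unfolding enc_def by simp
lemma enc_pred: "enc (2 * x - 1) = (x - 1, Suc x)"
proof (cases x)
  case 0 then show ?thesis unfolding enc_def by simp
next
  case (Suc y)
  have "2 * x - 1 = Suc (2 * y)" using Suc by simp
  then show ?thesis using enc_odd[of y] Suc by simp
qed
lemma enc_even2: "enc (Suc (Suc (2 * x))) = (Suc x, Suc (Suc x))"
  using enc_even[of "Suc x"] by simp

lemma mem_states: "(p, q) \<in> spider_states \<longleftrightarrow> q = Suc p \<or> q = Suc (Suc p)"
  unfolding spider_states_def by auto

lemma range_enc: "s \<in> spider_states \<Longrightarrow> s \<in> range enc"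
proof -
  assume "s \<in> spider_states"
  moreover obtain p q where s: "s = (p, q)" by fastforce
  ultimately have "q = Suc p \<or> q = Suc (Suc p)" using mem_states by simp
  then show ?thesis
  proof
    assume "q = Suc p"
    then have "s = enc (2 * p)" using s enc_even by simp
    then show ?thesis by simp
  next
    assume "q = Suc (Suc p)"
    then have "s = enc (Suc (2 * p))" using s enc_odd by simp
    then show ?thesis by simp
  qed
qed

lemma sr_even0: "spider_rate qbd (x, Suc x) (p, q) =
  (if (p, q) = (x, Suc (Suc x)) then qu (Suc x) else if (p, q) = (x - 1, Suc x) then qd x else 0)"
proof (cases "q = Suc p \<or> q = Suc (Suc p)")
  case False
  then show ?thesis unfolding spider_rate_def mem_states using qd0 by auto
next
  case True
  show ?thesis
  proof (cases "p = x")
    case True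
    then show ?thesis using \<open>q = Suc p \<or> q = Suc (Suc p)\<close> qd0
      unfolding spider_rate_def mem_states by (cases x) (auto simp: qbd_alt)
  next
    case False
    then show ?thesis using \<open>q = Suc p \<or> q = Suc (Suc p)\<close> qd0
      unfolding spider_rate_def mem_states by (auto simp: qbd_alt)
  qed
qed

lemma sr_odd0: "spider_rate qbd (x, Suc (Suc x)) (p, q) =
  (if (p, q) = (Suc x, Suc (Suc x)) then qu x else if (p, q) = (x, Suc x) then qd (Suc (Suc x)) else 0)"
proof (cases "q = Suc p \<or> q = Suc (Suc p)")
  case False
  then show ?thesis unfolding spider_rate_def mem_states by auto
next
  case True
  show ?thesis
  proof (cases "p = x")
    case True
    then show ?thesis using \<open>q = Suc p \<or> q = Suc (Suc p)\<close>
      unfolding spider_rate_def mem_states by (auto simp: qbd_alt)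
  next
    case False
    then show ?thesis using \<open>q = Suc p \<or> q = Suc (Suc p)\<close>
      unfolding spider_rate_def mem_states by (auto simp: qbd_alt)
  qed
qed

lemma sr_even: "spider_rate qbd (x, Suc x) t =
  (if t = (x, Suc (Suc x)) then qu (Suc x) else if t = (x - 1, Suc x) then qd x else 0)"
  by (cases t) (simp only: sr_even0)

lemma sr_odd: "spider_rate qbd (x, Suc (Suc x)) t =
  (if t = (Suc x, Suc (Suc x)) then qu x else if t = (x, Suc x) then qd (Suc (Suc x)) else 0)"
  by (cases t) (simp only: sr_odd0)

definition up :: "nat \<Rightarrow> real" where "up m = (if even m then qu (m div 2 + 1) else qu (m div 2))"
definition dn :: "nat \<Rightarrow> real" where "dn m = (if even m then qd (m div 2) else qd (m div 2 + 2))"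

lemma sr_enc: "spider_rate qbd (enc m) t = (if t = enc (Suc m) then up m else if t = enc (m - 1) then dn m else 0)"
proof (cases "even m")
  case True
  define x where "x = m div 2"
  have m: "m = 2 * x" using True unfolding x_def by simp
  show ?thesis unfolding m enc_even up_def dn_def
    using enc_odd[of x] enc_pred[of x] sr_even[of x t] by simp
next
  case False
  define x where "x = m div 2"
  have m: "m = Suc (2 * x)" using False unfolding x_def by presburger
  show ?thesis unfolding m enc_odd up_def dn_def
    using enc_even2[of x] enc_even[of x] sr_odd[of x t] by simp
qed



lemma up_pos: "up m > 0" unfolding up_def using qu_pos by simp
lemma dn_nn: "dn m \<ge> 0" unfolding dn_def using qd_pos qd0
  by (metis less_eq_real_def less_one linorder_not_le)
lemma dn0: "dn 0 = 0" unfolding dn_def using qd0 by simp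
lemma dn_pos: "m \<ge> 1 \<Longrightarrow> dn m > 0" unfolding dn_def by (auto intro!: qd_pos)
lemma up_le_dn: "m \<ge> 2 \<Longrightarrow> up m \<le> dn m"
  unfolding up_def dn_def using qu_half qd_half
  by (smt (verit, best) One_nat_def Suc_1 Suc_le_eq div_greater_zero_iff le_add2 nat_le_linear
      not_less_eq_eq zero_less_Suc)

definition asp :: "nat \<Rightarrow> real" where "asp m = up m / (up m + dn m)"

lemma tot_enc: "infsum (spider_rate qbd (enc m)) {z. z \<noteq> enc m} = up m + dn m"
proof -
  have ne1: "enc (Suc m) \<noteq> enc m" using enc_inj by (simp add: inj_eq)
  have ne2: "enc (Suc m) \<noteq> enc (m - 1)" using enc_inj by (simp add: inj_eq)
  have "infsum (spider_rate qbd (enc m)) {z. z \<noteq> enc m} =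
        infsum (spider_rate qbd (enc m)) {enc (Suc m), enc (m - 1)}"
  proof (rule infsum_cong_neutral)
    fix z assume z: "z \<in> {enc (Suc m), enc (m - 1)} - {z. z \<noteq> enc m}"
    then have "z = enc (m - 1)" "m = 0" using ne1 enc_inj by (auto simp: inj_eq)
    then show "spider_rate qbd (enc m) z = 0" using sr_enc[of m z] ne2 dn0 by simp
  next
    fix z assume "z \<in> {z. z \<noteq> enc m} - {enc (Suc m), enc (m - 1)}"
    then show "spider_rate qbd (enc m) z = 0" using sr_enc[of m z] by simp
  qed simp
  also have "\<dots> = up m + dn m" using ne2 sr_enc[of m] by simp
  finally show ?thesis .
qed

lemma jump_enc: "jump_chain (spider_rate qbd) (enc m) (enc k) = bd asp m k"
proof -
  have pos: "up m + dn m > 0" using up_pos[of m] dn_nn[of m] by simp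
  have inj: "enc a = enc b \<longleftrightarrow> a = b" for a b using enc_inj by (simp add: inj_eq)
  show ?thesis
    unfolding jump_chain_def tot_enc sr_enc bd_def asp_def inj
    using pos dn0 by (cases m) (auto simp: field_simps)
qed

lemma jump_out: "z \<notin> range enc \<Longrightarrow> jump_chain (spider_rate qbd) (enc m) z = 0"
  unfolding jump_chain_def sr_enc by auto

interpretation S: bdr asp
proof
  show "asp 0 = 1" unfolding asp_def dn0 using up_pos[of 0] by simp
  fix y :: nat
  show "1 \<le> y \<Longrightarrow> 0 < asp y \<and> asp y < 1"
    unfolding asp_def using up_pos[of y] dn_pos[of y] by (simp add: field_simps)
  show "2 \<le> y \<Longrightarrow> asp y \<le> 1 / 2"
    unfolding asp_def using up_pos[of y] dn_pos[of y] up_le_dn[of y] by (simp add: field_simps)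
qed

definition pis :: "nat \<Rightarrow> real" where
  "pis m = mu (fst (enc m)) * mu (snd (enc m)) * (up m + dn m)"

lemma pis_pos: "pis m > 0"
  unfolding pis_def using mu_pos up_pos[of m] dn_nn[of m] by (simp add: add_pos_nonneg)

lemma pis_rev: "pis m * asp m = pis (Suc m) * (1 - asp (Suc m))"
proof -
  have p1: "up m + dn m > 0" using up_pos[of m] dn_nn[of m] by simp
  have p2: "up (Suc m) + dn (Suc m) > 0" using up_pos[of "Suc m"] dn_nn[of "Suc m"] by simp
  have L: "pis m * asp m = mu (fst (enc m)) * mu (snd (enc m)) * up m"
    unfolding pis_def asp_def using p1 by (simp add: field_simps)
  have R: "pis (Suc m) * (1 - asp (Suc m)) = mu (fst (enc (Suc m))) * mu (snd (enc (Suc m))) * dn (Suc m)"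
    unfolding pis_def asp_def using p2 by (simp add: field_simps)
  show ?thesis
  proof (cases "even m")
    case True
    define x where "x = m div 2"
    have m: "m = 2 * x" using True unfolding x_def by simp
    have "mu (Suc x) * qu (Suc x) = mu (Suc (Suc x)) * qd (Suc (Suc x))" by (rule mu_rev)
    then have "mu (fst (enc m)) * mu (snd (enc m)) * up m = mu (fst (enc (Suc m))) * mu (snd (enc (Suc m))) * dn (Suc m)"
      unfolding m enc_even enc_odd up_def dn_def by simp
    then show ?thesis unfolding L R .
  next
    case False
    define x where "x = m div 2"
    have m: "m = Suc (2 * x)" using False unfolding x_def by presburger
    have "mu x * qu x = mu (Suc x) * qd (Suc x)" by (rule mu_rev)
    then have "mu (fst (enc m)) * mu (snd (enc m)) * up m = mu (fst (enc (Suc m))) * mu (snd (enc (Suc m))) * dn (Suc m)"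
      unfolding m enc_even2 enc_odd up_def dn_def by (simp add: mult_ac)
    then show ?thesis unfolding L R .
  qed
qed

lemma pis_bound: "pis m \<le> 8 * inverse (real (Suc m) ^ 2)"
proof -
  define x where "x = m div 2"
  have mx: "Suc m \<le> 2 * Suc x" unfolding x_def by simp
  have fe: "fst (enc m) = x" "snd (enc m) \<ge> Suc x" unfolding enc_def x_def by auto
  have m1: "mu (fst (enc m)) \<le> 1 / (real x + 1)" using mu_le fe by simp
  have m2: "mu (snd (enc m)) \<le> 1 / (real x + 1)"
  proof -
    have "mu (snd (enc m)) \<le> 1 / (real (snd (enc m)) + 1)" by (rule mu_le)
    also have "\<dots> \<le> 1 / (real x + 1)" using fe by (simp add: frac_le)
    finally show ?thesis .
  qed
  have s2: "up m + dn m \<le> 2" unfolding up_def dn_def using qu_le1 qd_le1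
    by (smt (verit))
  have "pis m \<le> 1 / (real x + 1) * (1 / (real x + 1)) * 2"
    unfolding pis_def using m1 m2 s2 mu_pos up_pos[of m] dn_nn[of m]
    by (intro mult_mono) (auto intro: mult_nonneg_nonneg less_imp_le)
  also have "\<dots> \<le> 8 * inverse (real (Suc m) ^ 2)"
  proof -
    have r: "real (Suc m) \<le> 2 * (real x + 1)" using mx by (metis of_nat_le_iff of_nat_Suc of_nat_mult of_nat_numeral add.commute)
    have "real (Suc m) ^ 2 \<le> (2 * (real x + 1)) ^ 2" using r by (intro power_mono) auto
    also have "(2 * (real x + 1)) ^ 2 = 4 * (real x + 1) ^ 2" by (simp add: power2_eq_square algebra_simps)
    finally have "real (Suc m) ^ 2 \<le> 4 * (real x + 1) ^ 2" .
    moreover have gen: "\<And>S A :: real. 0 < S \<Longrightarrow> 0 < A \<Longrightarrow> S \<le> 4 * A \<Longrightarrow> 2 / A \<le> 8 / S"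
      by (simp add: field_simps)
    ultimately have "2 / (real x + 1) ^ 2 \<le> 8 / real (Suc m) ^ 2"
      by (intro gen) auto
    moreover have "1 / (real x + 1) * (1 / (real x + 1)) * 2 = 2 / (real x + 1) ^ 2"
      by (simp add: power2_eq_square)
    ultimately show ?thesis by (simp add: divide_inverse)
  qed
  finally show ?thesis .
qed

lemma pis_summable: "summable pis"
proof (rule summable_comparison_test'[where N=0])
  have "summable (\<lambda>n. inverse (real n ^ 2))" by (rule inverse_power_summable) simp
  then have "summable (\<lambda>n. inverse (real (Suc n) ^ 2))"
    using summable_Suc_iff[of "\<lambda>n. inverse (real n ^ 2)"] by simp
  then show "summable (\<lambda>n. 8 * inverse (real (Suc n) ^ 2))" by (rule summable_mult)
next
  fix n :: nat
  show "norm (pis n) \<le> 8 * inverse (real (Suc n) ^ 2)" using pis_pos[of n] pis_bound[of n] by simp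
qed

lemma part2: "ctmc_positive_recurrent (spider_rate qbd) spider_states"
  unfolding ctmc_positive_recurrent_def
proof
  fix s assume "s \<in> spider_states"
  then obtain m where s: "s = enc m" using range_enc by blast
  have pm: "positive_recurrent_state (bd asp) m"
    by (rule S.positive[where \<pi>=pis]) (use pis_pos pis_rev pis_summable in auto)
  show "positive_recurrent_state (jump_chain (spider_rate qbd)) s"
    unfolding s using enc_inj jump_out jump_enc pm by (rule pos_transfer)
qed

theorem mainTheorem8:
  shows "ctmc_null_recurrent qbd UNIV \<and> ctmc_positive_recurrent (spider_rate qbd) spider_states"
  using part1 part2 by simp

end
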